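(* Let $n\ge4$ and consider the cycle graph $C_n$. For $i\in[n]$ let $\mathrm{Dec}_i^n:=i(i-1)\cdots 1\,n(n-1)\cdots(i+1)$. (1) If $i\le n-2$, then for every $j\in[n]$: $B(j,\mathrm{Dec}_i^n,C_n)=j$ if $j\le n-2$; $B(n-1,\mathrm{Dec}_i^n,C_n)=i(i-1)\cdots1\,n(n-1)$; $B(n,\mathrm{Dec}_i^n,C_n)=i(i-1)\cdots1\,n$. Consequently the number of $C_n$-friendship parking functions with outcome $\mathrm{Dec}_i^n$ is $(i+1)(i+2)$. (2) For $i=n-1$: $B(j,\mathrm{Dec}_{n-1}^n,C_n)=j$ for all $j\in[n-1]$, and $B(n,\mathrm{Dec}_{n-1}^n,C_n)=(n-1)\cdots1\,n$. Consequently the number of $C_n$-friendship parking functions with outcome $\mathrm{Dec}_{n-1}^n$ is $n$. (3) For $i=n$: $B(j,\mathrm{Dec}_n^n,C_n)=j$ for all $j\in[n]$, and the number of $C_n$-friendship parking functions with outcome $\mathrm{Dec}_n^n$ is $1$.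
   Context: $C_n$ ($n\ge3$) is the cycle graph with vertex set $[n]$ and edges $\{i,i+1\}$ for $i\in[n-1]$ and $\{n,1\}$. Permutations are in one-line notation. Friendship parking process for a graph $G$ on $[n]$ and a parking preference $p\in[n]^n$: cars $1,\dots,n$ enter in order into spots $1,\dots,n$ (initially empty); spot $k$ is available for car $i$ if it is unoccupied when $i$ enters and each of spots $k-1,k+1$ is unoccupied or occupied by a car adjacent to $i$ in $G$ (spots $0,n+1$ count as unoccupied); car $i$ parks in the first available spot $k\ge p_i$, failing otherwise. $p$ is a $G$-friendship parking function if all cars park; its outcome is the permutation $\pi$ with $\pi_k$ the car in spot $k$ at the end. Blockers: for a permutation $\pi$ that is a Hamiltonian path of $G$ (i.e. $\{\pi_k,\pi_{k+1}\}$ is an edge for all $k$) and $i\in[n]$, $j=\pi_k$ is a blocker for $i$ if (1) $j\le i$, or (2) $j>i$ and some $\ell\in\{\pi_{k-1},\pi_{k+1}\}$ satisfies $\ell<i$ and $\ell$ not adjacent to $i$ in $G$. The blocking sequence $B(i,\pi,G)$ is the longest contiguous block of $\pi$ ending at $i$ consisting of blockers for $i$. *)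

theory Defs
  imports Main
begin

definition cycle_adj :: "nat \<Rightarrow> nat \<Rightarrow> nat \<Rightarrow> bool" where
  "cycle_adj n a b \<longleftrightarrow> a \<in> {1..n} \<and> b \<in> {1..n} \<and>
     (b = a + 1 \<or> a = b + 1 \<or> (a = 1 \<and> b = n) \<or> (a = n \<and> b = 1))"

(* Parking state: occ k = car in spot k, 0 = empty; spots outside 1..n are always empty. *)
definition spot_available ::
  "(nat \<Rightarrow> nat \<Rightarrow> bool) \<Rightarrow> nat \<Rightarrow> (nat \<Rightarrow> nat) \<Rightarrow> nat \<Rightarrow> nat \<Rightarrow> bool" where
  "spot_available G n occ i k \<longleftrightarrow> 1 \<le> k \<and> k \<le> n \<and> occ k = 0 \<and>
     (occ (k - 1) = 0 \<or> G i (occ (k - 1))) \<and>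
     (occ (k + 1) = 0 \<or> G i (occ (k + 1)))"

definition park_car ::
  "(nat \<Rightarrow> nat \<Rightarrow> bool) \<Rightarrow> nat \<Rightarrow> (nat \<Rightarrow> nat) \<Rightarrow> nat \<Rightarrow> nat \<Rightarrow> (nat \<Rightarrow> nat) option" where
  "park_car G n occ i pref =
     (if \<exists>k. pref \<le> k \<and> spot_available G n occ i k
      then Some (occ((LEAST k. pref \<le> k \<and> spot_available G n occ i k) := i))
      else None)"

(* Run cars 1..n in order; p ! (i-1) is the preference of car i. None = some car fails. *)
definition fpp_run :: "(nat \<Rightarrow> nat \<Rightarrow> bool) \<Rightarrow> nat \<Rightarrow> nat list \<Rightarrow> (nat \<Rightarrow> nat) option" where
  "fpp_run G n p = foldl (\<lambda>st i. case st of None \<Rightarrow> None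
                                   | Some occ \<Rightarrow> park_car G n occ i (p ! (i - 1)))
                     (Some (\<lambda>_. 0)) [1..<n+1]"

(* Outcome permutation (one-line notation) if p is a G-friendship parking function. *)
definition fpp_outcome :: "(nat \<Rightarrow> nat \<Rightarrow> bool) \<Rightarrow> nat \<Rightarrow> nat list \<Rightarrow> nat list option" where
  "fpp_outcome G n p = map_option (\<lambda>occ. map occ [1..<n+1]) (fpp_run G n p)"

definition num_fpf_with_outcome :: "(nat \<Rightarrow> nat \<Rightarrow> bool) \<Rightarrow> nat \<Rightarrow> nat list \<Rightarrow> nat" where
  "num_fpf_with_outcome G n \<pi> =
     card {p. length p = n \<and> set p \<subseteq> {1..n} \<and> fpp_outcome G n p = Some \<pi>}"

(* Position k (0-indexed) of \<pi> holds a blocker for i. *)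
definition is_blocker :: "(nat \<Rightarrow> nat \<Rightarrow> bool) \<Rightarrow> nat list \<Rightarrow> nat \<Rightarrow> nat \<Rightarrow> bool" where
  "is_blocker G \<pi> i k \<longleftrightarrow> k < length \<pi> \<and>
     (\<pi> ! k \<le> i \<or>
      (\<pi> ! k > i \<and> (\<exists>m. (m + 1 = k \<or> m = k + 1) \<and> m < length \<pi> \<and>
                         \<pi> ! m < i \<and> \<not> G (\<pi> ! m) i)))"

definition pos_of :: "nat list \<Rightarrow> nat \<Rightarrow> nat" where
  "pos_of \<pi> i = (LEAST m. m < length \<pi> \<and> \<pi> ! m = i)"

definition blocking_seq :: "nat \<Rightarrow> nat list \<Rightarrow> (nat \<Rightarrow> nat \<Rightarrow> bool) \<Rightarrow> nat list" where
  "blocking_seq i \<pi> G =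
     (let m = pos_of \<pi> i;
          s = (LEAST s. s \<le> m \<and> (\<forall>k. s \<le> k \<and> k \<le> m \<longrightarrow> is_blocker G \<pi> i k))
      in drop s (take (m + 1) \<pi>))"

definition Dec :: "nat \<Rightarrow> nat \<Rightarrow> nat list" where
  "Dec n i = rev [1..<i+1] @ rev [i+1..<n+1]"

end

theory Submission
  imports Defs
begin

definition stepF :: "(nat \<Rightarrow> nat \<Rightarrow> bool) \<Rightarrow> nat \<Rightarrow> nat list \<Rightarrow> (nat \<Rightarrow> nat) option \<Rightarrow> nat \<Rightarrow> (nat \<Rightarrow> nat) option" where
  "stepF G n p = (\<lambda>st i. case st of None \<Rightarrow> None
                                   | Some occ \<Rightarrow> park_car G n occ i (p ! (i - 1)))"

definition st :: "(nat \<Rightarrow> nat \<Rightarrow> bool) \<Rightarrow> nat \<Rightarrow> nat list \<Rightarrow> nat \<Rightarrow> (nat \<Rightarrow> nat) option" where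
  "st G n p t = foldl (stepF G n p) (Some (\<lambda>_. 0)) [1..<t+1]"

lemma fpp_run_st: "fpp_run G n p = st G n p n"
  unfolding fpp_run_def st_def stepF_def by simp

lemma st_0: "st G n p 0 = Some (\<lambda>_. 0)"
  by (simp add: st_def)

lemma st_Suc: "st G n p (Suc t) = stepF G n p (st G n p t) (Suc t)"
  by (simp add: st_def)

lemma park_car_Some:
  assumes "park_car G n occ c q = Some o'"
  shows "\<exists>K. o' = occ(K := c) \<and> spot_available G n occ c K \<and> q \<le> K \<and>
     (\<forall>k. q \<le> k \<and> k < K \<longrightarrow> \<not> spot_available G n occ c k)"
proof -
  have ex: "\<exists>k. q \<le> k \<and> spot_available G n occ c k"
    using assms by (auto simp: park_car_def split: if_splits)
  define K where "K = (LEAST k. q \<le> k \<and> spot_available G n occ c k)"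
  have "o' = occ(K := c)" using assms ex by (simp add: park_car_def K_def)
  moreover have "q \<le> K \<and> spot_available G n occ c K"
    unfolding K_def by (rule LeastI_ex[OF ex])
  moreover have "\<forall>k. q \<le> k \<and> k < K \<longrightarrow> \<not> spot_available G n occ c k"
    unfolding K_def using not_less_Least by blast
  ultimately show ?thesis by blast
qed

lemma st_SucE:
  assumes "st G n p (Suc t) = Some o'"
  obtains occ K where "st G n p t = Some occ" "o' = occ(K := Suc t)" "spot_available G n occ (Suc t) K"
proof -
  obtain occ where occ: "st G n p t = Some occ"
    using assms by (cases "st G n p t") (auto simp: st_Suc stepF_def)
  then have "park_car G n occ (Suc t) (p ! t) = Some o'"
    using assms by (simp add: st_Suc stepF_def)
  then show ?thesis using park_car_Some that occ by blast
qed

lemma st_inv: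
  "st G n p t = Some occ \<Longrightarrow> (\<forall>k. occ k \<noteq> 0 \<longrightarrow> 1 \<le> k \<and> k \<le> n) \<and> (\<forall>k. occ k \<le> t)"
proof (induction t arbitrary: occ)
  case 0 then have "occ = (\<lambda>_. 0)" by (simp add: st_0)
  then show ?case by simp
next
  case (Suc t)
  from st_SucE[OF Suc.prems] obtain occ0 K where
    "st G n p t = Some occ0" "occ = occ0(K := Suc t)" "spot_available G n occ0 (Suc t) K" by blast
  with Suc.IH[of occ0] show ?case by (auto simp: spot_available_def le_SucI)
qed

lemma st_restrict:
  assumes "st G n p t = Some a" "t \<le> t'" "st G n p t' = Some b"
  shows "a = (\<lambda>k. if b k \<le> t then b k else 0)"
  using assms(2,3)
proof (induction t' arbitrary: b rule: dec_induct)
  case base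
  with assms(1) st_inv[OF assms(1)] show ?case by auto
next
  case (step m)
  from st_SucE[OF step.prems] obtain occ K where
    h: "st G n p m = Some occ" "b = occ(K := Suc m)" "spot_available G n occ (Suc m) K" by blast
  have "occ K = 0" using h(3) by (simp add: spot_available_def)
  with step.IH[OF h(1)] h(2) step.hyps show ?case by (auto simp: fun_eq_iff)
qed

lemma st_None_mono: "st G n p t = None \<Longrightarrow> st G n p (Suc t) = None"
  by (simp add: st_Suc stepF_def)

lemma st_defined:
  assumes "st G n p t' \<noteq> None" "t \<le> t'" shows "st G n p t \<noteq> None"
  using assms(2,1)
proof (induction t rule: inc_induct)
  case base then show ?case .
next
  case (step m) then show ?case by (metis st_None_mono)
qed

definition occ_of :: "nat list \<Rightarrow> nat \<Rightarrow> nat \<Rightarrow> nat" where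
  "occ_of \<pi> t k = (if 1 \<le> k \<and> k \<le> length \<pi> \<and> \<pi> ! (k - 1) \<le> t then \<pi> ! (k - 1) else 0)"

lemma outcome_iff:
  assumes len: "length \<pi> = n" and setp: "set \<pi> = {1..n}"
  shows "fpp_outcome G n p = Some \<pi> \<longleftrightarrow>
     (\<forall>t<n. park_car G n (occ_of \<pi> t) (Suc t) (p ! t) = Some (occ_of \<pi> (Suc t)))"
proof
  assume H: "fpp_outcome G n p = Some \<pi>"
  then obtain b where b: "st G n p n = Some b" "map b [1..<n+1] = \<pi>"
    by (auto simp: fpp_outcome_def fpp_run_st)
  have bk: "b k = occ_of \<pi> n k" for k
  proof (cases "1 \<le> k \<and> k \<le> n")
    case True
    have "\<pi> ! (k - 1) = map b [1..<n+1] ! (k - 1)" using b(2) by simp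
    also have "\<dots> = b k" using True by (subst nth_map_upt) auto
    finally have "\<pi> ! (k - 1) = b k" .
    moreover have "\<pi> ! (k-1) \<le> n" using setp True len
      by (metis atLeastAtMost_iff diff_less less_le_trans nth_mem zero_less_one le_less_trans)
    ultimately show ?thesis using True len by (simp add: occ_of_def)
  next
    case False
    then show ?thesis using st_inv[OF b(1)] len by (auto simp: occ_of_def)
  qed
  have stt: "st G n p t = Some (occ_of \<pi> t)" if tn: "t \<le> n" for t
  proof -
    obtain a where a: "st G n p t = Some a" using st_defined[of G n p n t] b(1) tn by auto
    have "a = (\<lambda>k. if b k \<le> t then b k else 0)" using st_restrict[OF a tn b(1)] .
    also have "\<dots> = occ_of \<pi> t" using tn by (auto simp: fun_eq_iff bk occ_of_def)
    finally show ?thesis using a by simp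
  qed
  show "\<forall>t<n. park_car G n (occ_of \<pi> t) (Suc t) (p ! t) = Some (occ_of \<pi> (Suc t))"
  proof (intro allI impI)
    fix t assume "t < n"
    then have "st G n p (Suc t) = Some (occ_of \<pi> (Suc t))" "st G n p t = Some (occ_of \<pi> t)"
      using stt by auto
    then show "park_car G n (occ_of \<pi> t) (Suc t) (p ! t) = Some (occ_of \<pi> (Suc t))"
      by (simp add: st_Suc stepF_def)
  qed
next
  assume H: "\<forall>t<n. park_car G n (occ_of \<pi> t) (Suc t) (p ! t) = Some (occ_of \<pi> (Suc t))"
  have pos: "\<pi> ! k \<ge> 1 \<and> \<pi> ! k \<le> n" if "k < n" for k
    using setp len that nth_mem by fastforce
  have "st G n p t = Some (occ_of \<pi> t)" if "t \<le> n" for t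
    using that
  proof (induction t)
    case 0
    have "occ_of \<pi> 0 = (\<lambda>_. 0)"
      using pos len by (auto simp: fun_eq_iff occ_of_def)
    then show ?case by (simp add: st_0)
  next
    case (Suc t)
    then show ?case using H by (simp add: st_Suc stepF_def)
  qed
  then have "st G n p n = Some (occ_of \<pi> n)" by simp
  moreover have "map (occ_of \<pi> n) [1..<n+1] = \<pi>"
    using pos len by (auto simp: list_eq_iff_nth_eq occ_of_def nth_map_upt simp del: upt_Suc)
  ultimately show "fpp_outcome G n p = Some \<pi>"
    by (simp add: fpp_outcome_def fpp_run_st)
qed

lemma park_char:
  assumes "occ P = 0" "c \<noteq> 0"
  shows "park_car G n occ c q = Some (occ(P := c)) \<longleftrightarrow>
     spot_available G n occ c P \<and> q \<le> P \<and> (\<forall>k. q \<le> k \<and> k < P \<longrightarrow> \<not> spot_available G n occ c k)"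
proof
  assume "park_car G n occ c q = Some (occ(P := c))"
  from park_car_Some[OF this] obtain K where K: "occ(P := c) = occ(K := c)" "spot_available G n occ c K" "q \<le> K"
     "\<forall>k. q \<le> k \<and> k < K \<longrightarrow> \<not> spot_available G n occ c k" by blast
  have "K = P"
  proof (rule ccontr)
    assume "K \<noteq> P"
    then have "(occ(P := c)) P = (occ(K := c)) P" using K(1) by simp
    then show False using \<open>K \<noteq> P\<close> assms by simp
  qed
  then show "spot_available G n occ c P \<and> q \<le> P \<and> (\<forall>k. q \<le> k \<and> k < P \<longrightarrow> \<not> spot_available G n occ c k)"
    using K by blast
next
  assume H: "spot_available G n occ c P \<and> q \<le> P \<and> (\<forall>k. q \<le> k \<and> k < P \<longrightarrow> \<not> spot_available G n occ c k)"
  then have ex: "\<exists>k. q \<le> k \<and> spot_available G n occ c k" by blast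
  have "(LEAST k. q \<le> k \<and> spot_available G n occ c k) = P"
    by (rule Least_equality) (use H not_less in blast)+
  then show "park_car G n occ c q = Some (occ(P := c))"
    using ex by (simp add: park_car_def)
qed

lemma occ_of_Suc:
  assumes "distinct \<pi>" "1 \<le> P" "P \<le> length \<pi>" "\<pi> ! (P - 1) = Suc t"
  shows "occ_of \<pi> (Suc t) = (occ_of \<pi> t)(P := Suc t)" "occ_of \<pi> t P = 0"
proof -
  show "occ_of \<pi> (Suc t) = (occ_of \<pi> t)(P := Suc t)"
  proof (rule ext)
    fix k
    show "occ_of \<pi> (Suc t) k = ((occ_of \<pi> t)(P := Suc t)) k"
    proof (cases "k = P")
      case True then show ?thesis using assms by (simp add: occ_of_def)
    next
      case False
      have "\<pi> ! (k - 1) \<noteq> Suc t" if k: "1 \<le> k" "k \<le> length \<pi>"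
      proof
        assume "\<pi> ! (k - 1) = Suc t"
        then have "\<pi> ! (k - 1) = \<pi> ! (P - 1)" using assms by simp
        then have "k - 1 = P - 1" using nth_eq_iff_index_eq[OF assms(1), of "k-1" "P-1"] assms k by auto
        then show False using k assms False by auto
      qed
      then show ?thesis using False by (auto simp: occ_of_def)
    qed
  qed
  show "occ_of \<pi> t P = 0" using assms by (simp add: occ_of_def)
qed

lemma card_lists_B:
  assumes "\<forall>t<n. finite (B t)"
  shows "card {xs. length xs = n \<and> (\<forall>t<n. xs ! t \<in> B t)} = (\<Prod>t<n. card (B t))"
  using assms
proof (induction n arbitrary: B)
  case 0 then show ?case by simp
next
  case (Suc n)
  let ?S = "{ys. length ys = n \<and> (\<forall>t<n. ys ! t \<in> B (Suc t))}"
  have eq: "{xs. length xs = Suc n \<and> (\<forall>t<Suc n. xs ! t \<in> B t)} = (\<lambda>(x, ys). x # ys) ` (B 0 \<times> ?S)"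
  proof (rule set_eqI, rule iffI)
    fix xs assume "xs \<in> {xs. length xs = Suc n \<and> (\<forall>t<Suc n. xs ! t \<in> B t)}"
    then obtain x ys where "xs = x # ys" "length ys = n" "\<forall>t<Suc n. xs ! t \<in> B t"
      by (auto simp: length_Suc_conv)
    then show "xs \<in> (\<lambda>(x, ys). x # ys) ` (B 0 \<times> ?S)"
      by (auto intro!: image_eqI[where x="(x, ys)"])
  next
    fix xs assume "xs \<in> (\<lambda>(x, ys). x # ys) ` (B 0 \<times> ?S)"
    then show "xs \<in> {xs. length xs = Suc n \<and> (\<forall>t<Suc n. xs ! t \<in> B t)}"
      by (auto simp: nth_Cons split: nat.splits)
  qed
  have "card ((\<lambda>(x, ys). x # ys) ` (B 0 \<times> ?S)) = card (B 0 \<times> ?S)"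
    by (rule card_image) (auto simp: inj_on_def)
  also have "\<dots> = card (B 0) * card ?S" by (rule card_cartesian_product)
  also have "card ?S = (\<Prod>t<n. card (B (Suc t)))" using Suc.IH[of "\<lambda>t. B (Suc t)"] Suc.prems by auto
  finally have "card {xs. length xs = Suc n \<and> (\<forall>t<Suc n. xs ! t \<in> B t)} = card (B 0) * (\<Prod>t<n. card (B (Suc t)))"
    using eq by simp
  then show ?case by (simp only: prod.lessThan_Suc_shift)
qed


lemma count_generic:
  assumes len: "length \<pi> = n" and setp: "set \<pi> = {1..n}" and dist: "distinct \<pi>"
  shows "num_fpf_with_outcome G n \<pi> =
    (\<Prod>t<n. card {q \<in> {1..n}. park_car G n (occ_of \<pi> t) (Suc t) q = Some (occ_of \<pi> (Suc t))})"
proof -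
  let ?B = "\<lambda>t. {q \<in> {1..n}. park_car G n (occ_of \<pi> t) (Suc t) q = Some (occ_of \<pi> (Suc t))}"
  have "{p. length p = n \<and> set p \<subseteq> {1..n} \<and> fpp_outcome G n p = Some \<pi>}
        = {xs. length xs = n \<and> (\<forall>t<n. xs ! t \<in> ?B t)}"
    using outcome_iff[OF len setp] by (auto simp: set_conv_nth)
  then show ?thesis unfolding num_fpf_with_outcome_def
    using card_lists_B[of n ?B] by simp
qed

lemma card_one:
  fixes P n :: nat
  assumes "A P" "1 \<le> P" "P \<le> n" "P \<ge> 2 \<longrightarrow> A (P - 1)"
  shows "card {q \<in> {1..n}. A P \<and> q \<le> P \<and> (\<forall>k. q \<le> k \<and> k < P \<longrightarrow> \<not> A k)} = 1"
proof -
  have "{q \<in> {1..n}. A P \<and> q \<le> P \<and> (\<forall>k. q \<le> k \<and> k < P \<longrightarrow> \<not> A k)} = {P}"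
  proof (rule set_eqI, rule iffI)
    fix q assume q: "q \<in> {q \<in> {1..n}. A P \<and> q \<le> P \<and> (\<forall>k. q \<le> k \<and> k < P \<longrightarrow> \<not> A k)}"
    show "q \<in> {P}"
    proof (rule ccontr)
      assume "q \<notin> {P}"
      then have "q \<noteq> P" "q \<le> P" "1 \<le> q" using q by auto
      then have qP: "q < P" "1 \<le> q" by linarith+
      have nA: "\<forall>k. q \<le> k \<and> k < P \<longrightarrow> \<not> A k" using q by blast
      have "A (P - 1)" using assms(4) qP by auto
      moreover have "q \<le> P - 1" "P - 1 < P" using qP by auto
      ultimately show False using nA by blast
    qed
  qed (use assms in auto)
  then show ?thesis by simp
qed

lemma card_all:
  fixes P n :: nat
  assumes "A P" "P \<le> n" "\<forall>k. k < P \<longrightarrow> \<not> A k"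
  shows "card {q \<in> {1..n}. A P \<and> q \<le> P \<and> (\<forall>k. q \<le> k \<and> k < P \<longrightarrow> \<not> A k)} = P"
proof -
  have "{q \<in> {1..n}. A P \<and> q \<le> P \<and> (\<forall>k. q \<le> k \<and> k < P \<longrightarrow> \<not> A k)} = {1..P}"
    using assms by auto
  then show ?thesis by simp
qed

lemma Dec_nth: "k < n \<Longrightarrow> i \<le> n \<Longrightarrow> Dec n i ! k = (if k < i then i - k else n + i - k)"
  by (auto simp: Dec_def nth_append rev_nth simp del: upt_Suc)

lemma Dec_len: "i \<le> n \<Longrightarrow> length (Dec n i) = n"
  by (simp add: Dec_def del: upt_Suc)

lemma Dec_set: "i \<le> n \<Longrightarrow> set (Dec n i) = {1..n}"
  by (auto simp: Dec_def)

lemma Dec_dist: "distinct (Dec n i)"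
  by (auto simp: Dec_def)

lemma occ_Dec: "i \<le> n \<Longrightarrow> occ_of (Dec n i) t k =
   (if 1 \<le> k \<and> k \<le> i \<and> i + 1 - k \<le> t then i + 1 - k
    else if i < k \<and> k \<le> n \<and> n + i + 1 - k \<le> t then n + i + 1 - k else 0)"
proof -
  assume i: "i \<le> n"
  have "1 \<le> k \<Longrightarrow> k \<le> n \<Longrightarrow> Dec n i ! (k - 1) = (if k \<le> i then i + 1 - k else n + i + 1 - k)"
    using i by (subst Dec_nth) auto
  then show ?thesis using i by (auto simp: occ_of_def Dec_len)
qed


definition AV :: "nat \<Rightarrow> nat \<Rightarrow> nat \<Rightarrow> nat \<Rightarrow> bool" where
  "AV n i t k = spot_available (cycle_adj n) n (occ_of (Dec n i) t) (Suc t) k"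

lemma occ0: "i \<le> n \<Longrightarrow> k \<le> i \<Longrightarrow> t < i + 1 - k \<Longrightarrow> occ_of (Dec n i) t k = 0"
  by (simp add: occ_Dec)
lemma occ_low: "i \<le> n \<Longrightarrow> 1 \<le> k \<Longrightarrow> k \<le> i \<Longrightarrow> i + 1 - k \<le> t \<Longrightarrow> occ_of (Dec n i) t k = i + 1 - k"
  by (simp add: occ_Dec)
lemma occ_high0: "i \<le> n \<Longrightarrow> i < k \<Longrightarrow> t < n + i + 1 - k \<Longrightarrow> occ_of (Dec n i) t k = 0"
  by (simp add: occ_Dec)
lemma occ_out: "i \<le> n \<Longrightarrow> n < k \<Longrightarrow> occ_of (Dec n i) t k = 0"
  by (simp add: occ_Dec)
lemma occ_high: "i \<le> n \<Longrightarrow> i < k \<Longrightarrow> k \<le> n \<Longrightarrow> n + i + 1 - k \<le> t \<Longrightarrow> occ_of (Dec n i) t k = n + i + 1 - k"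
  by (simp add: occ_Dec)

lemma adj_suc: "1 \<le> t \<Longrightarrow> Suc t \<le> n \<Longrightarrow> cycle_adj n (Suc t) t"
  by (simp add: cycle_adj_def)

lemma av_a1:
  assumes "n \<ge> 4" "1 \<le> i" "i \<le> n" "Suc t \<le> i" shows "AV n i t (i - t)"
proof -
  have o1: "occ_of (Dec n i) t (i - t) = 0" by (rule occ0) (use assms in auto)
  have o2: "occ_of (Dec n i) t (i - t - 1) = 0" by (rule occ0) (use assms in auto)
  have o3: "occ_of (Dec n i) t (i - t + 1) = 0 \<or> cycle_adj n (Suc t) (occ_of (Dec n i) t (i - t + 1))"
  proof (cases t)
    case 0 then show ?thesis using assms by (simp add: occ_high0)
  next
    case (Suc t')
    then have "occ_of (Dec n i) t (i - t + 1) = t" using assms by (subst occ_low) auto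
    then show ?thesis using adj_suc[of t n] Suc assms by auto
  qed
  show ?thesis unfolding AV_def spot_available_def using o1 o2 o3 assms by auto
qed

lemma av_a2:
  assumes "n \<ge> 4" "1 \<le> i" "i \<le> n" "Suc t \<le> i" "i - t \<ge> 2" shows "AV n i t (i - t - 1)"
proof -
  have o1: "occ_of (Dec n i) t (i - t) = 0" by (rule occ0) (use assms in auto)
  have o2: "occ_of (Dec n i) t (i - t - 1) = 0" by (rule occ0) (use assms in auto)
  have o3: "occ_of (Dec n i) t (i - t - 1 - 1) = 0" by (rule occ0) (use assms in auto)
  have e: "i - t - 1 + 1 = i - t" using assms by auto
  show ?thesis unfolding AV_def spot_available_def using o1 o2 o3 assms e by auto
qed

lemma av_b1:
  assumes "n \<ge> 4" "1 \<le> i" "i < Suc t" "Suc t \<le> n - 2" shows "AV n i t (n + i - t)"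
proof -
  have o1: "occ_of (Dec n i) t (n + i - t) = 0" by (rule occ_high0) (use assms in auto)
  have o2: "occ_of (Dec n i) t (n + i - t - 1) = 0" by (rule occ_high0) (use assms in auto)
  have o3: "occ_of (Dec n i) t (n + i - t + 1) = 0 \<or> cycle_adj n (Suc t) (occ_of (Dec n i) t (n + i - t + 1))"
  proof (cases "t = i")
    case True then show ?thesis using assms by (simp add: occ_out)
  next
    case False
    then have "occ_of (Dec n i) t (n + i - t + 1) = t" using assms by (subst occ_high) auto
    then show ?thesis using adj_suc[of t n] assms by auto
  qed
  show ?thesis unfolding AV_def spot_available_def using o1 o2 o3 assms by auto
qed

lemma av_b2:
  assumes "n \<ge> 4" "1 \<le> i" "i < Suc t" "Suc t \<le> n - 2" shows "AV n i t (n + i - t - 1)"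
proof -
  have o1: "occ_of (Dec n i) t (n + i - t) = 0" by (rule occ_high0) (use assms in auto)
  have o2: "occ_of (Dec n i) t (n + i - t - 1) = 0" by (rule occ_high0) (use assms in auto)
  have o3: "occ_of (Dec n i) t (n + i - t - 1 - 1) = 0" by (rule occ_high0) (use assms in auto)
  have e: "n + i - t - 1 + 1 = n + i - t" using assms by auto
  show ?thesis unfolding AV_def spot_available_def using o1 o2 o3 e assms by auto
qed

lemma av_c1:
  assumes "n \<ge> 4" "1 \<le> i" "i \<le> n - 2" "Suc t = n - 1" shows "AV n i t (i + 2)"
proof -
  have o1: "occ_of (Dec n i) t (i + 2) = 0" by (rule occ_high0) (use assms in auto)
  have o2: "occ_of (Dec n i) t (i + 2 - 1) = 0" by (rule occ_high0) (use assms in auto)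
  have o3: "occ_of (Dec n i) t (i + 2 + 1) = 0 \<or> cycle_adj n (Suc t) (occ_of (Dec n i) t (i + 2 + 1))"
  proof (cases "i + 2 = n")
    case True then show ?thesis using assms by (simp add: occ_out)
  next
    case False
    then have "occ_of (Dec n i) t (i + 2 + 1) = t" using assms by (subst occ_high) auto
    then show ?thesis using adj_suc[of t n] assms by auto
  qed
  show ?thesis unfolding AV_def spot_available_def using o1 o2 o3 assms by auto
qed

lemma av_c2:
  assumes "n \<ge> 4" "1 \<le> i" "i \<le> n - 2" "Suc t = n - 1" "k < i + 2" shows "\<not> AV n i t k"
proof
  assume av: "AV n i t k"
  then have k1: "1 \<le> k" "occ_of (Dec n i) t k = 0" by (auto simp: AV_def spot_available_def)
  show False
  proof (cases "k \<le> i")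
    case True
    then have "occ_of (Dec n i) t k = i + 1 - k" using assms k1 by (subst occ_low) auto
    then show False using k1 True by simp
  next
    case False
    then have k: "k = i + 1" using assms by auto
    have "occ_of (Dec n i) t i = 1" using assms by (subst occ_low) auto
    moreover have "\<not> cycle_adj n (Suc t) 1" using assms by (auto simp: cycle_adj_def)
    ultimately show False using av k by (auto simp: AV_def spot_available_def)
  qed
qed

lemma av_d1:
  assumes "n \<ge> 4" "1 \<le> i" "i \<le> n - 1" "Suc t = n" shows "AV n i t (i + 1)"
proof -
  have o1: "occ_of (Dec n i) t (i + 1) = 0" by (rule occ_high0) (use assms in auto)
  have o2: "occ_of (Dec n i) t (i + 1 - 1) = 1" using assms by (subst occ_low) auto
  have a2: "cycle_adj n (Suc t) 1" using assms by (auto simp: cycle_adj_def)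
  have o3: "occ_of (Dec n i) t (i + 1 + 1) = 0 \<or> cycle_adj n (Suc t) (occ_of (Dec n i) t (i + 1 + 1))"
  proof (cases "i + 1 = n")
    case True then show ?thesis using assms by (simp add: occ_out)
  next
    case False
    then have "occ_of (Dec n i) t (i + 1 + 1) = t" using assms by (subst occ_high) auto
    then show ?thesis using adj_suc[of t n] assms by auto
  qed
  show ?thesis unfolding AV_def spot_available_def using o1 o2 a2 o3 assms by auto
qed

lemma av_d2:
  assumes "n \<ge> 4" "1 \<le> i" "i \<le> n - 1" "Suc t = n" "k < i + 1" shows "\<not> AV n i t k"
proof
  assume av: "AV n i t k"
  then have k1: "1 \<le> k" "occ_of (Dec n i) t k = 0" by (auto simp: AV_def spot_available_def)
  then have "occ_of (Dec n i) t k = i + 1 - k" using assms by (subst occ_low) auto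
  then show False using k1 assms by simp
qed


definition fcnt :: "nat \<Rightarrow> nat \<Rightarrow> nat \<Rightarrow> nat" where
  "fcnt n i t = (if Suc t \<le> i then 1 else if Suc t \<le> n - 2 then 1 else if Suc t = n - 1 then i + 2 else i + 1)"

lemma Bset_card:
  assumes n4: "n \<ge> 4" and i: "1 \<le> i" "i \<le> n" and t: "t < n"
  shows "card {q \<in> {1..n}. park_car (cycle_adj n) n (occ_of (Dec n i) t) (Suc t) q = Some (occ_of (Dec n i) (Suc t))}
         = fcnt n i t"
proof -
  define P where "P = (if Suc t \<le> i then i - t else n + i - t)"
  have P: "1 \<le> P" "P \<le> n" using assms by (auto simp: P_def)
  have nth: "Dec n i ! (P - 1) = Suc t"
    using assms by (subst Dec_nth) (auto simp: P_def)
  have os: "occ_of (Dec n i) (Suc t) = (occ_of (Dec n i) t)(P := Suc t)" "occ_of (Dec n i) t P = 0"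
    using occ_of_Suc[OF Dec_dist, of P n i t] P nth i by (auto simp: Dec_len)
  have eq: "{q \<in> {1..n}. park_car (cycle_adj n) n (occ_of (Dec n i) t) (Suc t) q = Some (occ_of (Dec n i) (Suc t))}
     = {q \<in> {1..n}. AV n i t P \<and> q \<le> P \<and> (\<forall>k. q \<le> k \<and> k < P \<longrightarrow> \<not> AV n i t k)}"
    unfolding os(1) AV_def using park_char[where occ="occ_of (Dec n i) t" and P=P and c="Suc t" and G="cycle_adj n" and n=n, OF os(2)] by simp
  show ?thesis
  proof (cases "Suc t \<le> i")
    case True
    have "card {q \<in> {1..n}. AV n i t P \<and> q \<le> P \<and> (\<forall>k. q \<le> k \<and> k < P \<longrightarrow> \<not> AV n i t k)} = 1"
    proof (rule card_one)
      show "AV n i t P" using av_a1[OF n4 i True] True by (simp add: P_def)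
      show "2 \<le> P \<longrightarrow> AV n i t (P - 1)" using av_a2[OF n4 i True] True by (simp add: P_def)
    qed (use P in auto)
    then show ?thesis using eq True by (simp add: fcnt_def)
  next
    case F1: False
    show ?thesis
    proof (cases "Suc t \<le> n - 2")
      case True
      have "card {q \<in> {1..n}. AV n i t P \<and> q \<le> P \<and> (\<forall>k. q \<le> k \<and> k < P \<longrightarrow> \<not> AV n i t k)} = 1"
      proof (rule card_one)
        show "AV n i t P" using av_b1[OF n4 i(1) _ True] F1 by (simp add: P_def)
        show "2 \<le> P \<longrightarrow> AV n i t (P - 1)" using av_b2[OF n4 i(1) _ True] F1 by (simp add: P_def)
      qed (use P in auto)
      then show ?thesis using eq F1 True by (simp add: fcnt_def)
    next
      case F2: False
      show ?thesis
      proof (cases "Suc t = n - 1")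
        case True
        have iP: "i \<le> n - 2" "P = i + 2" using F1 True assms by (auto simp: P_def)
        have "card {q \<in> {1..n}. AV n i t P \<and> q \<le> P \<and> (\<forall>k. q \<le> k \<and> k < P \<longrightarrow> \<not> AV n i t k)} = P"
        proof (rule card_all)
          show "AV n i t P" using av_c1[OF n4 i(1) iP(1) True] iP by simp
          show "\<forall>k<P. \<not> AV n i t k" using av_c2[OF n4 i(1) iP(1) True] iP by simp
        qed (use P in auto)
        then show ?thesis using eq F1 F2 True iP by (simp add: fcnt_def)
      next
        case False
        have tn: "Suc t = n" using F1 F2 False t by auto
        have iP: "i \<le> n - 1" "P = i + 1" using F1 tn assms by (auto simp: P_def)
        have "card {q \<in> {1..n}. AV n i t P \<and> q \<le> P \<and> (\<forall>k. q \<le> k \<and> k < P \<longrightarrow> \<not> AV n i t k)} = P"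
        proof (rule card_all)
          show "AV n i t P" using av_d1[OF n4 i(1) iP(1) tn] iP by simp
          show "\<forall>k<P. \<not> AV n i t k" using av_d2[OF n4 i(1) iP(1) tn] iP by simp
        qed (use P in auto)
        then show ?thesis using eq F1 F2 False iP by (simp add: fcnt_def)
      qed
    qed
  qed
qed

lemma num_Dec:
  assumes n4: "n \<ge> 4" and i: "1 \<le> i" "i \<le> n"
  shows "num_fpf_with_outcome (cycle_adj n) n (Dec n i) = (\<Prod>t<n. fcnt n i t)"
  using count_generic[OF Dec_len[OF i(2)] Dec_set[OF i(2)] Dec_dist] Bset_card[OF assms]
  by simp

lemma prod_fcnt:
  assumes n4: "n \<ge> 4"
  shows "(\<Prod>t<n. fcnt n i t) = fcnt n i (n - 2) * fcnt n i (n - 1)"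
proof -
  define m where "m = n - 2"
  have m: "n = Suc (Suc m)" using n4 by (simp add: m_def)
  have "(\<Prod>t<m. fcnt n i t) = 1"
    by (rule prod.neutral) (auto simp: fcnt_def m)
  then show ?thesis using m by (simp add: mult.commute)
qed


lemma pos_of_eq:
  assumes "distinct \<pi>" "m < length \<pi>" "\<pi> ! m = j"
  shows "pos_of \<pi> j = m"
  unfolding pos_of_def
proof (rule Least_equality)
  show "m < length \<pi> \<and> \<pi> ! m = j" using assms by simp
  fix y assume "y < length \<pi> \<and> \<pi> ! y = j"
  then have "y = m" using nth_eq_iff_index_eq[OF assms(1), of y m] assms by simp
  then show "m \<le> y" by simp
qed

lemma bs_single:
  assumes "distinct \<pi>" "m < length \<pi>" "\<pi> ! m = j" "m = 0 \<or> \<not> is_blocker G \<pi> j (m - 1)"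
  shows "blocking_seq j \<pi> G = [j]"
proof -
  have p: "pos_of \<pi> j = m" using pos_of_eq[OF assms(1-3)] .
  have s: "(LEAST s. s \<le> m \<and> (\<forall>k. s \<le> k \<and> k \<le> m \<longrightarrow> is_blocker G \<pi> j k)) = m"
  proof (rule Least_equality)
    show "m \<le> m \<and> (\<forall>k. m \<le> k \<and> k \<le> m \<longrightarrow> is_blocker G \<pi> j k)"
      using assms by (auto simp: is_blocker_def)
    fix y assume y: "y \<le> m \<and> (\<forall>k. y \<le> k \<and> k \<le> m \<longrightarrow> is_blocker G \<pi> j k)"
    show "m \<le> y"
    proof (rule ccontr)
      assume "\<not> m \<le> y"
      then have ym: "y \<le> m - 1" "m \<noteq> 0" by auto
      from y have "\<forall>k. y \<le> k \<and> k \<le> m \<longrightarrow> is_blocker G \<pi> j k" by (rule conjunct2)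
      then have "is_blocker G \<pi> j (m - 1)" using ym by simp
      then show False using ym assms(4) by simp
    qed
  qed
  have "drop m (take (m + 1) \<pi>) = [\<pi> ! m]"
    using assms(2) by (simp add: take_Suc_conv_app_nth)
  then show ?thesis unfolding blocking_seq_def Let_def p s using assms(3) by simp
qed

lemma bs_full:
  assumes "distinct \<pi>" "m < length \<pi>" "\<pi> ! m = j" "\<forall>k \<le> m. is_blocker G \<pi> j k"
  shows "blocking_seq j \<pi> G = take (m + 1) \<pi>"
proof -
  have p: "pos_of \<pi> j = m" using pos_of_eq[OF assms(1-3)] .
  have s: "(LEAST s. s \<le> m \<and> (\<forall>k. s \<le> k \<and> k \<le> m \<longrightarrow> is_blocker G \<pi> j k)) = 0"
  proof (rule Least_equality)
    show "0 \<le> m \<and> (\<forall>k. 0 \<le> k \<and> k \<le> m \<longrightarrow> is_blocker G \<pi> j k)" using assms(4) by simp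
  qed simp
  show ?thesis unfolding blocking_seq_def Let_def p s by simp
qed

definition dpos :: "nat \<Rightarrow> nat \<Rightarrow> nat \<Rightarrow> nat" where
  "dpos n i j = (if j \<le> i then i - j else n + i - j)"

lemma dpos_props:
  assumes "1 \<le> i" "i \<le> n" "1 \<le> j" "j \<le> n"
  shows "dpos n i j < n" "Dec n i ! dpos n i j = j"
  using assms by (auto simp: dpos_def Dec_nth)

lemma Dec_seg:
  assumes "1 \<le> i" "i \<le> n" "1 \<le> j" "j \<le> i \<or> (i < j \<and> j + 2 \<le> n)"
    "m' \<le> dpos n i j" "dpos n i j \<le> m' + 2"
  shows "Dec n i ! m' = j + (dpos n i j - m')"
  using assms by (subst Dec_nth) (auto simp: dpos_def)

lemma bs_Dec_single:
  assumes "1 \<le> i" "i \<le> n" "1 \<le> j" "j \<le> i \<or> (i < j \<and> j + 2 \<le> n)"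
  shows "blocking_seq j (Dec n i) (cycle_adj n) = [j]"
proof -
  let ?m = "dpos n i j"
  have jn: "j \<le> n" using assms by auto
  note dp = dpos_props[OF assms(1,2,3) jn]
  have "\<not> is_blocker (cycle_adj n) (Dec n i) j (?m - 1)" if m0: "?m \<noteq> 0"
  proof
    assume b: "is_blocker (cycle_adj n) (Dec n i) j (?m - 1)"
    have v1: "Dec n i ! (?m - 1) = j + 1" using Dec_seg[OF assms, of "?m - 1"] m0 by simp
    have v0: "Dec n i ! ?m = j" using dp by simp
    have v2: "?m \<ge> 2 \<Longrightarrow> Dec n i ! (?m - 2) = j + 2" using Dec_seg[OF assms, of "?m - 2"] by simp
    from b v1 obtain m' where m': "m' + 1 = ?m - 1 \<or> m' = ?m - 1 + 1" "Dec n i ! m' < j"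
      by (auto simp: is_blocker_def)
    show False
    proof (cases "m' = ?m")
      case True then show False using m' v0 by simp
    next
      case False
      then have "m' = ?m - 2" "?m \<ge> 2" using m' m0 by auto
      then show False using m' v2 by simp
    qed
  qed
  then show ?thesis
    using bs_single[OF Dec_dist, of ?m n i j "cycle_adj n"] dp Dec_len[OF assms(2)] by auto
qed

lemma take_Dec1: "i < n \<Longrightarrow> take (i + 1) (Dec n i) = rev [1..<i+1] @ [n]"
proof -
  assume a: "i < n"
  have "[i+1..<n+1] = [i+1..<n] @ [n]" using a by simp
  then show ?thesis using a by (simp add: Dec_def take_append del: upt_Suc)
qed

lemma take_Dec2: "i + 2 \<le> n \<Longrightarrow> take (i + 2) (Dec n i) = rev [1..<i+1] @ [n, n - 1]"
proof -
  assume a: "i + 2 \<le> n"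
  define m where "m = n - 2"
  have nm: "n = m + 2" using a by (simp add: m_def)
  have "[i+1..<n+1] = [i+1..<n-1] @ [n - 1, n]"
    using a unfolding nm by simp
  then show ?thesis using a by (simp add: Dec_def take_append del: upt_Suc)
qed


lemma bs_n1:
  assumes n4: "n \<ge> 4" and i: "1 \<le> i" "i + 2 \<le> n"
  shows "blocking_seq (n - 1) (Dec n i) (cycle_adj n) = rev [1..<i+1] @ [n, n - 1]"
proof -
  have L: "length (Dec n i) = n" using i by (simp add: Dec_len)
  have bl: "is_blocker (cycle_adj n) (Dec n i) (n - 1) k" if k: "k \<le> i + 1" for k
  proof (cases "k = i")
    case True
    have v: "Dec n i ! k = n" "Dec n i ! (i - 1) = 1" using True i by (simp_all add: Dec_nth)
    have "\<not> cycle_adj n 1 (n - 1)" using n4 by (auto simp: cycle_adj_def)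
    then show ?thesis unfolding is_blocker_def L using v True i n4
      by (intro conjI disjI2) (auto intro!: exI[of _ "i - 1"])
  next
    case False
    then have "Dec n i ! k \<le> n - 1" using k i by (auto simp: Dec_nth)
    then show ?thesis using k i by (simp add: is_blocker_def L)
  qed
  have "blocking_seq (n - 1) (Dec n i) (cycle_adj n) = take (i + 1 + 1) (Dec n i)"
    by (rule bs_full[OF Dec_dist]) (use bl i L in \<open>auto simp: Dec_nth\<close>)
  then show ?thesis using take_Dec2[OF i(2)] by simp
qed

lemma bs_n:
  assumes i: "1 \<le> i" "i < n"
  shows "blocking_seq n (Dec n i) (cycle_adj n) = rev [1..<i+1] @ [n]"
proof -
  have L: "length (Dec n i) = n" using i by (simp add: Dec_len)
  have bl: "is_blocker (cycle_adj n) (Dec n i) n k" if k: "k \<le> i" for k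
  proof -
    have "Dec n i ! k \<le> n" using k i by (auto simp: Dec_nth)
    then show ?thesis using k i by (simp add: is_blocker_def L)
  qed
  have "blocking_seq n (Dec n i) (cycle_adj n) = take (i + 1) (Dec n i)"
    by (rule bs_full[OF Dec_dist]) (use bl i L in \<open>auto simp: Dec_nth\<close>)
  then show ?thesis using take_Dec1[OF i(2)] by simp
qed

lemma fcnt_vals:
  assumes "n \<ge> 4"
  shows "i + 2 \<le> n \<Longrightarrow> fcnt n i (n - 2) = i + 2"
    "i + 2 \<le> n \<Longrightarrow> fcnt n i (n - 1) = i + 1"
    "fcnt n (n - 1) (n - 2) = 1" "fcnt n (n - 1) (n - 1) = n"
    "fcnt n n (n - 2) = 1" "fcnt n n (n - 1) = 1"
  using assms unfolding fcnt_def by auto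

theorem proposition2p8:
  fixes n :: nat
  assumes "n \<ge> 4"
  shows
   "(\<forall>i. 1 \<le> i \<and> i \<le> n - 2 \<longrightarrow>
       (\<forall>j. 1 \<le> j \<and> j \<le> n - 2 \<longrightarrow> blocking_seq j (Dec n i) (cycle_adj n) = [j]) \<and>
       blocking_seq (n - 1) (Dec n i) (cycle_adj n) = rev [1..<i+1] @ [n, n - 1] \<and>
       blocking_seq n (Dec n i) (cycle_adj n) = rev [1..<i+1] @ [n] \<and>
       num_fpf_with_outcome (cycle_adj n) n (Dec n i) = (i + 1) * (i + 2))
    \<and> ((\<forall>j. 1 \<le> j \<and> j \<le> n - 1 \<longrightarrow> blocking_seq j (Dec n (n - 1)) (cycle_adj n) = [j]) \<and>
       blocking_seq n (Dec n (n - 1)) (cycle_adj n) = rev [1..<n] @ [n] \<and>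
       num_fpf_with_outcome (cycle_adj n) n (Dec n (n - 1)) = n)
    \<and> ((\<forall>j. 1 \<le> j \<and> j \<le> n \<longrightarrow> blocking_seq j (Dec n n) (cycle_adj n) = [j]) \<and>
       num_fpf_with_outcome (cycle_adj n) n (Dec n n) = 1)"
proof (intro conjI allI impI)
  fix i assume i: "1 \<le> i \<and> i \<le> n - 2"
  have i1: "1 \<le> i" and i2: "i + 2 \<le> n" and i3: "i < n" using i assms by linarith+
  show "blocking_seq j (Dec n i) (cycle_adj n) = [j]" if j: "1 \<le> j \<and> j \<le> n - 2" for j
  proof -
    have "j \<le> i \<or> (i < j \<and> j + 2 \<le> n)" using j assms by linarith
    moreover have "i \<le> n" using i by linarith
    ultimately show ?thesis using bs_Dec_single[of i n j] i j by simp
  qed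
  show "blocking_seq (n - 1) (Dec n i) (cycle_adj n) = rev [1..<i+1] @ [n, n - 1]"
    by (rule bs_n1[OF assms i1 i2])
  show "blocking_seq n (Dec n i) (cycle_adj n) = rev [1..<i+1] @ [n]"
    by (rule bs_n[OF i1 i3])
  show "num_fpf_with_outcome (cycle_adj n) n (Dec n i) = (i + 1) * (i + 2)"
    using num_Dec[OF assms i1] prod_fcnt[OF assms, of i] fcnt_vals[OF assms] i1 i2 i3 by simp
next
  fix j assume j: "1 \<le> j \<and> j \<le> n - 1"
  show "blocking_seq j (Dec n (n - 1)) (cycle_adj n) = [j]"
    using bs_Dec_single[of "n - 1" n j] j assms by simp
next
  show "blocking_seq n (Dec n (n - 1)) (cycle_adj n) = rev [1..<n] @ [n]"
    using bs_n[of "n - 1" n] assms by simp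
next
  show "num_fpf_with_outcome (cycle_adj n) n (Dec n (n - 1)) = n"
    using num_Dec[OF assms, of "n - 1"] prod_fcnt[OF assms, of "n - 1"] fcnt_vals[OF assms] assms by simp
next
  fix j assume j: "1 \<le> j \<and> j \<le> n"
  show "blocking_seq j (Dec n n) (cycle_adj n) = [j]"
    using bs_Dec_single[of n n j] j assms by simp
next
  show "num_fpf_with_outcome (cycle_adj n) n (Dec n n) = 1"
    using num_Dec[OF assms, of n] prod_fcnt[OF assms, of n] fcnt_vals[OF assms] assms by simp
qed

end
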